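(* Let $t_0>0$, $q>0$, let $\lambda:[t_0,+\infty[\to\,]0,+\infty[$ be continuous and let $\tau(t)=\frac{1}{q^q}\big(t_0+\int_{t_0}^t[\lambda(r)]^{1/q}dr\big)^q$ for $t\ge t_0$. Suppose there exist $C_0>0$ and real numbers $b>a\ge 0$ such that $$\int_{t_0}^t[\tau(r)]^a[\lambda(r)]^{-b}\,dr\le C_0\qquad\forall t\ge t_0 .$$ Then there exists $C_1>0$ such that $\tau(t)\ge C_1(t-t_0)^{\frac{qb+1}{b-a}}$ for all $t\ge t_0$. *)

theory Defs
  imports "HOL-Analysis.Analysis"
begin

end

theory Submission
  imports Defs
begin

lemma exp_alg:
  fixes q b a X Y Z Q :: real
  assumes "q > 0" "b > 0"
  shows "(1 - 1/(q*b+1))*(-((1/(q*b+1))/(1 - 1/(q*b+1)))*X + -a/b*Y + 1/q*Z)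
       + (1/(q*b+1))*(X + (a*(-q*Q + q*Y) + -b*Z)) = -q*a*(1/(q*b+1))*Q"
proof -
  define d where "d = q*b+1"
  have d: "d > 0" unfolding d_def using assms by (simp add: add_pos_pos)
  have e1: "1 - 1/d = (q*b)/d" using d unfolding d_def by (simp add: field_simps)
  have e2: "(1/d)/((q*b)/d) = 1/(q*b)" using d assms by (simp add: field_simps)
  have "(q*b)/d*(-(1/(q*b))*X + -a/b*Y + 1/q*Z) + (1/d)*(X + (a*(-q*Q + q*Y) + -b*Z))
        = -q*a*(1/d)*Q"
    using d assms by (simp add: field_simps)
  then show ?thesis unfolding d_def[symmetric] e1 e2 .
qed

lemma exp_alg2:
  fixes q b a :: real
  assumes "q > 0" "b > 0" "a < b"
  shows "q*((b-a)/(q*b+1)) * (-((1/(q*b+1))/(1 - 1/(q*b+1)))) + (b-a)/b = q*((b-a)/(q*b+1))"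
proof -
  define d where "d = q*b+1"
  have d: "d > 0" unfolding d_def using assms by (simp add: add_pos_pos)
  have e1: "1 - 1/d = (q*b)/d" using d unfolding d_def by (simp add: field_simps)
  have e2: "(1/d)/((q*b)/d) = 1/(q*b)" using d assms by (simp add: field_simps)
  have "q*((b-a)/d) * (-(1/(q*b))) + (b-a)/b = q*((b-a)/d)"
  proof -
    have "q*((b-a)/d) * (-(1/(q*b))) + (b-a)/b = (b-a)*(d - 1)/(b*d)"
      using assms(1,2) d by (simp add: field_simps)
    also have "d - 1 = q*b" unfolding d_def by simp
    also have "(b-a)*(q*b)/(b*d) = q*((b-a)/d)" using assms(1,2) d by (simp add: field_simps)
    finally show ?thesis .
  qed
  then show ?thesis unfolding d_def[symmetric] e1 e2 .
qed

theorem mainTheorem2: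
  fixes t0 q a b C0 :: real and lam tau :: "real \<Rightarrow> real"
  assumes t0_pos: "t0 > 0" and q_pos: "q > 0"
    and lam_cont: "continuous_on {t0..} lam"
    and lam_pos: "\<And>t. t \<ge> t0 \<Longrightarrow> lam t > 0"
    and tau_def: "\<And>t. t \<ge> t0 \<Longrightarrow>
        tau t = (1 / q powr q) * (t0 + integral {t0..t} (\<lambda>r. lam r powr (1 / q))) powr q"
    and C0_pos: "C0 > 0" and ab: "0 \<le> a" "a < b"
    and bound: "\<And>t. t \<ge> t0 \<Longrightarrow>
        integral {t0..t} (\<lambda>r. tau r powr a * lam r powr (- b)) \<le> C0"
  shows "\<exists>C1 > 0. \<forall>t \<ge> t0. tau t \<ge> C1 * (t - t0) powr ((q * b + 1) / (b - a))"
proof -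
  have b_pos: "b > 0" using ab by linarith
  have qb1: "q*b+1 > 0" using q_pos b_pos by (simp add: add_pos_pos)
  define g where "g r = lam r powr (1/q)" for r
  have gcont: "continuous_on {t0..} g" unfolding g_def using lam_cont lam_pos
    by (intro continuous_on_powr continuous_intros) (auto dest: less_imp_neq[symmetric])
  define L where "L t = t0 + integral {t0..t} g" for t
  define \<theta> where "\<theta> = 1/(q*b+1)"
  have th: "0 < \<theta>" "\<theta> < 1" unfolding \<theta>_def using qb1 q_pos b_pos
    by (auto simp: field_simps)
  define c where "c = q powr (-q*a*\<theta>)"
  define K where "K = \<theta>*C0 + (1-\<theta>)*(b/(b-a))"
  define \<beta> where "\<beta> = (b-a)/(q*b+1)"
  have c_pos: "c > 0" unfolding c_def using q_pos by simp
  have K_pos: "K > 0" unfolding K_def using th C0_pos ab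
    by (intro add_pos_pos mult_pos_pos) auto
  have beta_pos: "\<beta> > 0" unfolding \<beta>_def using qb1 ab by simp
  have tauL: "tau r = (1 / q powr q) * L r powr q" if "r \<ge> t0" for r
    using tau_def[OF that] unfolding L_def g_def by simp
  have Lge: "L r \<ge> t0" if "r \<ge> t0" for r
  proof -
    have "continuous_on {t0..r} g" using gcont by (rule continuous_on_subset) auto
    then have "integral {t0..r} g \<ge> 0"
      by (intro integral_nonneg integrable_continuous_interval) (auto simp: g_def)
    then show ?thesis unfolding L_def by simp
  qed
  have key: "(t - t0) * c \<le> K * L t powr (q*\<beta>)" if tt: "t \<ge> t0" for t
  proof -
    have gc: "continuous_on {t0..t} g" using gcont by (rule continuous_on_subset) auto
    have lc: "continuous_on {t0..t} lam" using lam_cont by (rule continuous_on_subset) auto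
    have Lder: "(L has_real_derivative g x) (at x within {t0..t})" if "x \<in> {t0..t}" for x
    proof -
      have "((\<lambda>x. t0 + integral {t0..x} g) has_real_derivative (0 + g x)) (at x within {t0..t})"
        by (intro DERIV_add DERIV_const integral_has_real_derivative[OF gc that])
      then show ?thesis unfolding L_def[abs_def] by simp
    qed
    have Lcont: "continuous_on {t0..t} L" unfolding L_def[abs_def]
      by (intro continuous_intros indefinite_integral_continuous_1 integrable_continuous_interval gc)
    define f where "f r = tau r powr a * lam r powr (-b)" for r
    define h where "h r = L r powr (-a/b) * g r" for r
    define F where "F r = (b/(b-a)) * L r powr ((b-a)/b)" for r
    have Lpos: "L r > 0" if "r \<in> {t0..t}" for r using Lge[of r] that t0_pos by auto
    have fcont: "continuous_on {t0..t} f"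
    proof -
      have "continuous_on {t0..t} (\<lambda>r. ((1 / q powr q) * L r powr q) powr a * lam r powr (-b))"
        using Lpos lam_pos q_pos
        by (intro continuous_intros Lcont lc continuous_on_powr) (force dest: Lpos lam_pos)+
      then show ?thesis
        by (rule continuous_on_cong[THEN iffD1, rotated 2]) (auto simp: f_def tauL)
    qed
    have hcont: "continuous_on {t0..t} h" unfolding h_def[abs_def]
      using Lpos
      by (intro continuous_intros Lcont gc continuous_on_powr) (force dest: Lpos)+
    have hint: "(h has_integral (F t - F t0)) {t0..t}"
    proof (rule fundamental_theorem_of_calculus[OF tt])
      fix x assume x: "x \<in> {t0..t}"
      have "((\<lambda>r. L r powr ((b-a)/b)) has_real_derivative
              ((b-a)/b * L x powr ((b-a)/b - 1)) * g x) (at x within {t0..t})"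
        by (rule DERIV_chain2[OF has_real_derivative_powr[OF Lpos[OF x]] Lder[OF x]])
      then have "(F has_real_derivative (b/(b-a)) * (((b-a)/b * L x powr ((b-a)/b - 1)) * g x))
                  (at x within {t0..t})"
        unfolding F_def[abs_def] by (rule DERIV_cmult)
      moreover have "(b/(b-a)) * (((b-a)/b * L x powr ((b-a)/b - 1)) * g x) = h x"
      proof -
        have "(b-a)/b - 1 = -a/b" using b_pos by (simp add: field_simps)
        then show ?thesis using ab b_pos by (simp add: h_def)
      qed
      ultimately show "(F has_vector_derivative h x) (at x within {t0..t})"
        by (simp add: has_real_derivative_iff_has_vector_derivative[symmetric])
    qed
    have F0: "F t0 \<ge> 0" unfolding F_def using ab by simp
    define S where "S = L t powr (q*\<beta>)"
    define sp where "sp = S powr (-(\<theta>/(1-\<theta>)))"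
    have S_pos: "S > 0" unfolding S_def using Lpos[of t] tt by simp
    have sp_pos: "sp > 0" unfolding sp_def using S_pos by simp
    have pw: "c \<le> \<theta>*(S*f r) + (1-\<theta>)*(sp*h r)" if r: "r \<in> {t0..t}" for r
    proof -
      have lr: "lam r > 0" using lam_pos r by auto
      have Lr: "L r > 0" using Lpos r by auto
      have taur: "tau r > 0" using tauL[of r] r Lr q_pos by simp
      have fr: "f r > 0" unfolding f_def using taur lr by simp
      have hr: "h r > 0" unfolding h_def g_def using Lr lr by simp
      define u where "u = ln (S * f r)"
      define v where "v = ln (sp * h r)"
      have "exp ((1 - \<theta>) *\<^sub>R v + \<theta> *\<^sub>R u) \<le> (1-\<theta>) * exp v + \<theta> * exp u"
        using convex_onD[OF exp_convex, of \<theta> v u] th by simp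
      moreover have "exp u = S * f r" unfolding u_def using S_pos fr by simp
      moreover have "exp v = sp * h r" unfolding v_def using sp_pos hr by simp
      moreover have "(1 - \<theta>) * v + \<theta> * u = ln c"
      proof -
        have lt: "ln (tau r) = -q * ln q + q * ln (L r)"
          using tauL[of r] r Lr q_pos by (simp add: ln_mult ln_div ln_powr)
        have u: "u = ln S + (a * (-q * ln q + q * ln (L r)) + -b * ln (lam r))"
          unfolding u_def f_def using S_pos taur lr by (simp add: ln_mult ln_powr lt)
        have v: "v = -(\<theta>/(1-\<theta>)) * ln S + -a/b * ln (L r) + 1/q * ln (lam r)"
          unfolding v_def h_def g_def sp_def using S_pos Lr lr by (simp add: ln_mult ln_powr)
        have "ln c = -q*a*\<theta> * ln q" unfolding c_def using q_pos by (simp add: ln_powr)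
        then show ?thesis unfolding u v \<theta>_def
          using exp_alg[OF q_pos b_pos, of "ln S" a "ln (L r)" "ln (lam r)" "ln q"] by simp
      qed
      ultimately show ?thesis using c_pos by (simp add: algebra_simps)
    qed
    have fi: "f integrable_on {t0..t}" by (rule integrable_continuous_interval[OF fcont])
    have hi: "h integrable_on {t0..t}" by (rule integrable_continuous_interval[OF hcont])
    have "(t - t0) * c = integral {t0..t} (\<lambda>r. c)" using tt by simp
    also have "\<dots> \<le> integral {t0..t} (\<lambda>r. \<theta>*(S*f r) + (1-\<theta>)*(sp*h r))"
      by (intro integral_le pw integrable_add integrable_continuous_interval continuous_intros fcont hcont) auto
    also have "\<dots> = \<theta>*S*integral {t0..t} f + (1-\<theta>) * sp * integral {t0..t} h"
    proof -
      have i1: "(\<lambda>r. \<theta>*(S*f r)) integrable_on {t0..t}"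
        by (intro integrable_continuous_interval continuous_intros fcont)
      have i2: "(\<lambda>r. (1-\<theta>)*(sp*h r)) integrable_on {t0..t}"
        by (intro integrable_continuous_interval continuous_intros hcont)
      show ?thesis by (simp add: integral_add[OF i1 i2] mult.assoc)
    qed
    also have "\<dots> \<le> \<theta>*S*C0 + (1-\<theta>) * sp * F t"
    proof (intro add_mono mult_left_mono)
      show "integral {t0..t} f \<le> C0" using bound[OF tt] unfolding f_def .
      show "integral {t0..t} h \<le> F t" using hint F0 by (simp add: integral_unique)
    qed (use th S_pos sp_pos in auto)
    also have "\<theta>*S*C0 + (1-\<theta>) * sp * F t = K * S"
    proof -
      have eqF: "sp * F t = (b/(b-a)) * S"
      proof -
      have "sp * L t powr ((b-a)/b) = S"
        unfolding sp_def S_def powr_powr powr_add[symmetric]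
        using exp_alg2[OF q_pos b_pos ab(2)] by (simp add: \<theta>_def \<beta>_def)
      then show ?thesis unfolding F_def by (simp add: algebra_simps)
    qed
      have "(1-\<theta>) * sp * F t = (1-\<theta>) * (b/(b-a)) * S" by (simp only: mult.assoc eqF)
      then show ?thesis unfolding K_def by (simp add: algebra_simps)
    qed
    finally show ?thesis unfolding S_def .
  qed
  define C1 where "C1 = (1 / q powr q) * (c/K) powr (1/\<beta>)"
  show ?thesis
  proof (intro exI[of _ C1] conjI allI impI)
    show "C1 > 0" unfolding C1_def using c_pos K_pos q_pos by simp
    fix t assume tt: "t \<ge> t0"
    have Lp: "L t > 0" using Lge[OF tt] t0_pos by simp
    have "(t - t0) * c / K \<le> L t powr (q*\<beta>)" using key[OF tt] K_pos
      by (simp add: divide_le_eq mult.commute)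
    then have "((t - t0) * c / K) powr (1/\<beta>) \<le> (L t powr (q*\<beta>)) powr (1/\<beta>)"
      using tt c_pos K_pos beta_pos by (intro powr_mono2) auto
    also have "\<dots> = L t powr q" using beta_pos by (simp add: powr_powr)
    finally have A: "((t - t0) * c / K) powr (1/\<beta>) \<le> L t powr q" .
    have "((t - t0) * c / K) = (c/K) * (t - t0)" by simp
    then have "((t - t0) * c / K) powr (1/\<beta>) = (c/K) powr (1/\<beta>) * (t - t0) powr (1/\<beta>)"
      using powr_mult[of "c/K" "t - t0" "1/\<beta>"] tt c_pos K_pos by (simp add: mult.commute)
    with A have "(c/K) powr (1/\<beta>) * (t - t0) powr (1/\<beta>) \<le> L t powr q" by simp
    moreover have "1/\<beta> = (q * b + 1) / (b - a)" unfolding \<beta>_def by simp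
    ultimately show "tau t \<ge> C1 * (t - t0) powr ((q * b + 1) / (b - a))"
      unfolding C1_def tauL[OF tt] using q_pos by (simp add: mult.assoc divide_right_mono)
  qed
qed

end
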